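(* Let $R$ be an integral domain with field of fractions $\mathbb{Q}(R)$, let $M$ be a torsion-free $R$-module, and let $M_{\mathbb{Q}}=M\otimes_R\mathbb{Q}(R)$. Then the map $\mathbb{P}(M)\to\mathbb{P}(M_{\mathbb{Q}})$, $[m]\mapsto[m\otimes1]$, is a well-defined bijection.
   Context: For a module $N$ over an integral domain $S$, let $N^\circ=N\setminus\{0\}$; define $x\sim'y$ on $N^\circ$ if there exist $m\in N$ and $r,s\in S$ with $x=rm$, $y=sm$; let $\sim$ be the equivalence relation generated by $\sim'$; and let $\mathbb{P}(N)=N^\circ/\sim$. For $M_{\mathbb{Q}}$ this is taken over the ring $\mathbb{Q}(R)$, where it coincides with the usual projective space of the $\mathbb{Q}(R)$-vector space. $M$ is torsion-free if $rm=0$ with $r\ne0$ implies $m=0$. *)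

theory Defs
  imports Complex_Main "HOL-Computational_Algebra.Fraction_Field"
begin

definition proj_rel :: "('r \<Rightarrow> 'm \<Rightarrow> 'm) \<Rightarrow> 'm set \<Rightarrow> 'm \<Rightarrow> 'm \<Rightarrow> 'm \<Rightarrow> bool" where
  "proj_rel sc N z x y \<longleftrightarrow> x \<in> N \<and> y \<in> N \<and> x \<noteq> z \<and> y \<noteq> z \<and>
     (\<exists>m\<in>N. \<exists>r s. x = sc r m \<and> y = sc s m)"

definition proj_class :: "('r \<Rightarrow> 'm \<Rightarrow> 'm) \<Rightarrow> 'm set \<Rightarrow> 'm \<Rightarrow> 'm \<Rightarrow> 'm set" where
  "proj_class sc N z x = {y. equivclp (proj_rel sc N z) x y}"

definition proj_space :: "('r \<Rightarrow> 'm \<Rightarrow> 'm) \<Rightarrow> 'm set \<Rightarrow> 'm \<Rightarrow> 'm set set" where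
  "proj_space sc N z = proj_class sc N z ` (N - {z})"

definition torsion_free :: "('a::idom \<Rightarrow> 'b::ab_group_add \<Rightarrow> 'b) \<Rightarrow> bool" where
  "torsion_free sc \<longleftrightarrow> (\<forall>r m. r \<noteq> 0 \<longrightarrow> sc r m = 0 \<longrightarrow> m = 0)"

text \<open>M tensor Q(R), realised as the localisation S^{-1}M with S = R - {0}:
  classes of pairs (m, s), s nonzero, with (m,s) ~ (m',s') iff t(s'm - sm') = 0 for some t nonzero.\<close>

definition loc_rel :: "('a::idom \<Rightarrow> 'b::ab_group_add \<Rightarrow> 'b) \<Rightarrow> (('b \<times> 'a) \<times> ('b \<times> 'a)) set" where
  "loc_rel sc = {((m, s), (m', s')). s \<noteq> 0 \<and> s' \<noteq> 0 \<and>
       (\<exists>t. t \<noteq> 0 \<and> sc t (sc s' m - sc s m') = 0)}"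

definition loc_class :: "('a::idom \<Rightarrow> 'b::ab_group_add \<Rightarrow> 'b) \<Rightarrow> 'b \<Rightarrow> 'a \<Rightarrow> ('b \<times> 'a) set" where
  "loc_class sc m s = loc_rel sc `` {(m, s)}"

definition loc_carrier :: "('a::idom \<Rightarrow> 'b::ab_group_add \<Rightarrow> 'b) \<Rightarrow> ('b \<times> 'a) set set" where
  "loc_carrier sc = (UNIV \<times> {s. s \<noteq> 0}) // loc_rel sc"

definition loc_zero :: "('a::idom \<Rightarrow> 'b::ab_group_add \<Rightarrow> 'b) \<Rightarrow> ('b \<times> 'a) set" where
  "loc_zero sc = loc_class sc 0 1"

definition loc_scale :: "('a::idom \<Rightarrow> 'b::ab_group_add \<Rightarrow> 'b) \<Rightarrow> 'a fract \<Rightarrow> ('b \<times> 'a) set \<Rightarrow> ('b \<times> 'a) set" where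
  "loc_scale sc q X = \<Union>{loc_class sc (sc a m) (b * s) | a b m s. b \<noteq> 0 \<and> q = Fract a b \<and> (m, s) \<in> X}"

end

theory Submission
  imports Defs
begin

lemma equivclp_sub:
  assumes "equivclp R x y" "\<And>a b. R a b \<Longrightarrow> E a b" "\<And>a b. E a b \<Longrightarrow> E b a"
    "\<And>a b c. E a b \<Longrightarrow> E b c \<Longrightarrow> E a c"
  shows "x = y \<or> E x y"
  using assms(1) by induct (use assms(2-4) in blast)+

lemma class_eq:
  assumes "equivclp R x y" shows "{z. equivclp R x z} = {z. equivclp R y z}"
  using assms by (blast intro: equivclp_trans equivclp_sym)

lemma class_eqD:
  assumes "{z. equivclp R x z} = {z. equivclp R y z}" shows "equivclp R x y"
  using assms by (metis (mono_tags, lifting) equivclp_refl equivclp_sym mem_Collect_eq)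

locale tfmod = module sc for sc :: "'a::idom \<Rightarrow> 'b::ab_group_add \<Rightarrow> 'b" +
  assumes tf: "torsion_free sc"
begin

lemma tfD: "r \<noteq> 0 \<Longrightarrow> sc r m = 0 \<Longrightarrow> m = 0"
  using tf unfolding torsion_free_def by blast

lemma scale_nz: "r \<noteq> 0 \<Longrightarrow> m \<noteq> 0 \<Longrightarrow> sc r m \<noteq> 0"
  using tfD by blast

lemma scale_cancel: "t \<noteq> 0 \<Longrightarrow> sc t x = sc t y \<longleftrightarrow> x = y"
  using tfD[of t "x - y"] by (auto simp: scale_right_diff_distrib)

lemma ex_t: "(\<exists>t. t \<noteq> 0 \<and> sc t X = 0) \<longleftrightarrow> X = 0"
proof
  assume "\<exists>t. t \<noteq> 0 \<and> sc t X = 0" then show "X = 0" using tfD by blast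
next
  assume "X = 0" then show "\<exists>t. t \<noteq> 0 \<and> sc t X = 0" by (intro exI[of _ 1]) simp
qed

lemma loc_rel_iff: "((m, s), (m', s')) \<in> loc_rel sc \<longleftrightarrow> s \<noteq> 0 \<and> s' \<noteq> 0 \<and> sc s' m = sc s m'"
  unfolding loc_rel_def by (simp add: ex_t del: scale_scale)

lemma equiv_loc: "equiv (UNIV \<times> {s. s \<noteq> 0}) (loc_rel sc)"
proof (rule equivI)
  show "loc_rel sc \<subseteq> (UNIV \<times> {s. s \<noteq> 0}) \<times> (UNIV \<times> {s. s \<noteq> 0})"
    unfolding loc_rel_def by auto
  show "refl_on (UNIV \<times> {s. s \<noteq> 0}) (loc_rel sc)"
    unfolding refl_on_def by (auto simp: loc_rel_iff loc_rel_def)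
  show "sym (loc_rel sc)" unfolding sym_def by (auto simp: loc_rel_iff)
  show "trans (loc_rel sc)"
  proof (rule transI)
    fix x y z assume "(x, y) \<in> loc_rel sc" "(y, z) \<in> loc_rel sc"
    then obtain m s m' s' m'' s'' where e: "x = (m, s)" "y = (m', s')" "z = (m'', s'')"
      and h: "s \<noteq> 0" "s' \<noteq> 0" "s'' \<noteq> 0" "sc s' m = sc s m'" "sc s'' m' = sc s' m''"
      by (cases x; cases y; cases z) (auto simp: loc_rel_iff)
    have "sc s' (sc s'' m) = sc s' (sc s m'')"
    proof -
      have "sc s' (sc s'' m) = sc s'' (sc s' m)" by (simp add: ac_simps)
      also have "\<dots> = sc s'' (sc s m')" using h by simp
      also have "\<dots> = sc s (sc s'' m')" by (simp add: ac_simps)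
      also have "\<dots> = sc s (sc s' m'')" using h by simp
      also have "\<dots> = sc s' (sc s m'')" by (simp add: ac_simps)
      finally show ?thesis .
    qed
    then have "sc s'' m = sc s m''" using scale_cancel h by blast
    then show "(x, z) \<in> loc_rel sc" using e h by (simp add: loc_rel_iff)
  qed
qed

lemma loc_class_eq: "s \<noteq> 0 \<Longrightarrow> s' \<noteq> 0 \<Longrightarrow>
   loc_class sc m s = loc_class sc m' s' \<longleftrightarrow> sc s' m = sc s m'"
  unfolding loc_class_def
  using eq_equiv_class_iff[OF equiv_loc, of "(m,s)" "(m',s')"] by (simp add: loc_rel_iff)

lemma loc_class_mem: "s \<noteq> 0 \<Longrightarrow> (m, s) \<in> loc_class sc m s"
  unfolding loc_class_def by (simp add: loc_rel_iff)

lemma loc_class_carrier: "s \<noteq> 0 \<Longrightarrow> loc_class sc m s \<in> loc_carrier sc"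
  unfolding loc_carrier_def loc_class_def by (auto intro: quotientI)

lemma loc_carrierE:
  assumes "X \<in> loc_carrier sc"
  obtains m s where "s \<noteq> 0" "X = loc_class sc m s"
  using assms unfolding loc_carrier_def loc_class_def by (auto elim!: quotientE)

lemma loc_zero_iff: "s \<noteq> 0 \<Longrightarrow> loc_class sc m s = loc_zero sc \<longleftrightarrow> m = 0"
  unfolding loc_zero_def by (simp add: loc_class_eq)

lemma loc_class_memD: "(m', s') \<in> loc_class sc m s \<Longrightarrow> s \<noteq> 0 \<and> s' \<noteq> 0 \<and> sc s' m = sc s m'"
  unfolding loc_class_def by (simp add: loc_rel_iff)

lemma loc_scale_eq:
  assumes "s \<noteq> 0" "b \<noteq> 0"
  shows "loc_scale sc (Fract a b) (loc_class sc m s) = loc_class sc (sc a m) (b * s)"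
proof -
  have "loc_class sc (sc a' m') (b' * s') = loc_class sc (sc a m) (b * s)"
    if h: "b' \<noteq> 0" "Fract a b = Fract a' b'" "(m', s') \<in> loc_class sc m s" for a' b' m' s'
  proof -
    from h have e1: "a * b' = a' * b" using assms by (simp add: eq_fract)
    from loc_class_memD[OF h(3)] have s': "s' \<noteq> 0" and e2: "sc s' m = sc s m'" by auto
    have "sc (b * s) (sc a' m') = sc (b' * s') (sc a m)"
    proof -
      have "sc (b' * s') (sc a m) = sc (a * b') (sc s' m)" by (simp add: ac_simps)
      also have "\<dots> = sc (a' * b) (sc s m')" using e1 e2 by simp
      also have "\<dots> = sc (b * s) (sc a' m')" by (simp add: ac_simps)
      finally show ?thesis by simp
    qed
    then show ?thesis using assms s' h(1) by (simp add: loc_class_eq)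
  qed
  note claim = this
  show ?thesis
  proof
    show "loc_scale sc (Fract a b) (loc_class sc m s) \<subseteq> loc_class sc (sc a m) (b * s)"
    proof
      fix p assume "p \<in> loc_scale sc (Fract a b) (loc_class sc m s)"
      then obtain a' b' m' s' where "b' \<noteq> 0" "Fract a b = Fract a' b'"
        "(m', s') \<in> loc_class sc m s" "p \<in> loc_class sc (sc a' m') (b' * s')"
        unfolding loc_scale_def by blast
      then show "p \<in> loc_class sc (sc a m) (b * s)" using claim by metis
    qed
    show "loc_class sc (sc a m) (b * s) \<subseteq> loc_scale sc (Fract a b) (loc_class sc m s)"
      unfolding loc_scale_def using assms(2) loc_class_mem[OF assms(1)] by blast
  qed
qed

definition appr :: "'b \<Rightarrow> 'b \<Rightarrow> bool" where
  "appr x y \<longleftrightarrow> x \<noteq> 0 \<and> y \<noteq> 0 \<and> (\<exists>a b. a \<noteq> 0 \<and> b \<noteq> 0 \<and> sc a x = sc b y)"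

lemma appr_refl: "x \<noteq> 0 \<Longrightarrow> appr x x"
  unfolding appr_def by (intro conjI exI[of _ 1]) auto

lemma appr_sym: "appr x y \<Longrightarrow> appr y x"
  unfolding appr_def by metis

lemma appr_trans: "appr x y \<Longrightarrow> appr y z \<Longrightarrow> appr x z"
proof -
  assume "appr x y" "appr y z"
  then obtain a b c d where h: "x \<noteq> 0" "z \<noteq> 0" "a \<noteq> 0" "b \<noteq> 0" "c \<noteq> 0" "d \<noteq> 0"
    "sc a x = sc b y" "sc c y = sc d z" unfolding appr_def by blast
  have "sc (c * a) x = sc (b * d) z"
  proof -
    have "sc (c * a) x = sc c (sc a x)" by simp
    also have "\<dots> = sc c (sc b y)" using h by simp
    also have "\<dots> = sc b (sc c y)" by (simp add: mult.commute)
    also have "\<dots> = sc b (sc d z)" using h by simp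
    also have "\<dots> = sc (b * d) z" by simp
    finally show ?thesis .
  qed
  then show "appr x z" unfolding appr_def using h by (metis mult_eq_0_iff)
qed

abbreviation "PR \<equiv> proj_rel sc UNIV 0"
abbreviation "QR \<equiv> proj_rel (loc_scale sc) (loc_carrier sc) (loc_zero sc)"

lemma P_equiv: "x \<noteq> 0 \<Longrightarrow> y \<noteq> 0 \<Longrightarrow> equivclp PR x y \<longleftrightarrow> appr x y"
proof
  assume nz: "x \<noteq> 0" "y \<noteq> 0" and "equivclp PR x y"
  have "PR a b \<Longrightarrow> appr a b" for a b
  proof -
    assume "PR a b"
    then obtain m r s where h: "a = sc r m" "b = sc s m" "a \<noteq> 0" "b \<noteq> 0"
      unfolding proj_rel_def by blast
    then have "r \<noteq> 0" "s \<noteq> 0" by auto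
    moreover have "sc s a = sc r b" using h by (simp add: ac_simps)
    ultimately show "appr a b" using h unfolding appr_def by blast
  qed
  then have "x = y \<or> appr x y"
    using equivclp_sub[OF \<open>equivclp PR x y\<close>, of appr] appr_sym appr_trans by blast
  then show "appr x y" using nz appr_refl by blast
next
  assume "appr x y"
  then obtain a b where h: "x \<noteq> 0" "y \<noteq> 0" "a \<noteq> 0" "b \<noteq> 0" "sc a x = sc b y"
    unfolding appr_def by blast
  have 1: "PR x (sc a x)" unfolding proj_rel_def using h scale_nz
    by (metis UNIV_I scale_one)
  have 2: "PR y (sc b y)" unfolding proj_rel_def using h scale_nz
    by (metis UNIV_I scale_one)
  show "equivclp PR x y" using 1 2 h(5)
    by (metis converse_r_into_equivclp equivclp_trans r_into_equivclp)
qed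

definition QE :: "('b \<times> 'a) set \<Rightarrow> ('b \<times> 'a) set \<Rightarrow> bool" where
  "QE X Y \<longleftrightarrow> X \<in> loc_carrier sc \<and> Y \<in> loc_carrier sc \<and>
     (\<exists>m s m' s'. (m, s) \<in> X \<and> (m', s') \<in> Y \<and> appr m m')"

lemma QE_all:
  assumes "QE X Y" "(m, s) \<in> X" "(m', s') \<in> Y"
  shows "appr m m'"
proof -
  obtain m1 s1 m1' s1' where h: "(m1, s1) \<in> X" "(m1', s1') \<in> Y" "appr m1 m1'"
    and c: "X \<in> loc_carrier sc" "Y \<in> loc_carrier sc" using assms(1) unfolding QE_def by blast
  have aux: "appr u v" if A: "Z \<in> loc_carrier sc" "(u, t) \<in> Z" "(v, t') \<in> Z" "u \<noteq> 0" for Z u v t t'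
  proof -
    obtain n r where "r \<noteq> 0" "Z = loc_class sc n r" using loc_carrierE[OF A(1)] by blast
    with A have "t \<noteq> 0" "t' \<noteq> 0" "sc t n = sc r u" "sc t' n = sc r v"
      using loc_class_memD by blast+
    then have e: "sc (t' * r) u = sc (t * r) v"
    proof -
      assume h2: "t \<noteq> 0" "t' \<noteq> 0" "sc t n = sc r u" "sc t' n = sc r v"
      have "sc (t' * r) u = sc t' (sc r u)" by simp
      also have "\<dots> = sc t' (sc t n)" using h2 by simp
      also have "\<dots> = sc t (sc t' n)" by (simp add: mult.commute)
      also have "\<dots> = sc t (sc r v)" using h2 by simp
      also have "\<dots> = sc (t * r) v" by simp
      finally show ?thesis .
    qed
    have tr: "t' * r \<noteq> 0" "t * r \<noteq> 0" using \<open>r \<noteq> 0\<close> \<open>t \<noteq> 0\<close> \<open>t' \<noteq> 0\<close> by simp_all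
    have "v \<noteq> 0"
    proof
      assume "v = 0"
      then have "sc (t' * r) u = 0" using e by simp
      then show False using scale_nz[OF tr(1) \<open>u \<noteq> 0\<close>] by simp
    qed
    then show ?thesis unfolding appr_def using e tr \<open>u \<noteq> 0\<close> by blast
  qed
  have "m1 \<noteq> 0" "m1' \<noteq> 0" using h(3) unfolding appr_def by auto
  have "appr m m1" using aux[OF c(1) h(1) assms(2) \<open>m1 \<noteq> 0\<close>] by (rule appr_sym)
  moreover have "appr m1' m'" using aux[OF c(2) h(2) assms(3) \<open>m1' \<noteq> 0\<close>] .
  ultimately show ?thesis using h(3) appr_trans by blast
qed

lemma QE_sym: "QE X Y \<Longrightarrow> QE Y X"
  unfolding QE_def using appr_sym by blast

lemma QE_trans: "QE X Y \<Longrightarrow> QE Y Z \<Longrightarrow> QE X Z"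
proof -
  assume a: "QE X Y" "QE Y Z"
  then obtain m s m' s' m'' s'' where h: "(m, s) \<in> X" "(m', s') \<in> Y" "(m'', s'') \<in> Z"
    unfolding QE_def by blast
  have "appr m m'" "appr m' m''" using QE_all a h by blast+
  then show "QE X Z" using a h appr_trans unfolding QE_def by blast
qed

lemma QR_QE: "QR X Y \<Longrightarrow> QE X Y"
proof -
  assume "QR X Y"
  then obtain M0 r t where h: "X \<in> loc_carrier sc" "Y \<in> loc_carrier sc" "X \<noteq> loc_zero sc"
    "Y \<noteq> loc_zero sc" "M0 \<in> loc_carrier sc" "X = loc_scale sc r M0" "Y = loc_scale sc t M0"
    unfolding proj_rel_def by blast
  obtain m0 s0 where m0: "s0 \<noteq> 0" "M0 = loc_class sc m0 s0" using loc_carrierE[OF h(5)] by blast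
  obtain a b where r: "r = Fract a b" "b \<noteq> 0" by (cases r)
  obtain c d where t: "t = Fract c d" "d \<noteq> 0" by (cases t)
  have X: "X = loc_class sc (sc a m0) (b * s0)" using h(6) r m0 loc_scale_eq by simp
  have Y: "Y = loc_class sc (sc c m0) (d * s0)" using h(7) t m0 loc_scale_eq by simp
  have nz: "sc a m0 \<noteq> 0" "sc c m0 \<noteq> 0" using h(3,4) X Y loc_zero_iff m0 r t by auto
  have "sc c (sc a m0) = sc a (sc c m0)" by (simp add: ac_simps)
  moreover have "a \<noteq> 0" "c \<noteq> 0" using nz by auto
  ultimately have "appr (sc a m0) (sc c m0)" unfolding appr_def using nz by blast
  then show "QE X Y" unfolding QE_def using h(1,2) X Y loc_class_mem m0 r t
    by (metis mult_eq_0_iff)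
qed

lemma Q_equiv:
  assumes "x \<noteq> 0" "y \<noteq> 0"
  shows "equivclp QR (loc_class sc x 1) (loc_class sc y 1) \<longleftrightarrow> appr x y"
proof
  assume "equivclp QR (loc_class sc x 1) (loc_class sc y 1)"
  then have "loc_class sc x 1 = loc_class sc y 1 \<or> QE (loc_class sc x 1) (loc_class sc y 1)"
    using equivclp_sub[of QR _ _ QE] QR_QE QE_sym QE_trans by blast
  then show "appr x y"
  proof
    assume "loc_class sc x 1 = loc_class sc y 1"
    then have "x = y" by (simp add: loc_class_eq)
    then show ?thesis using assms appr_refl by blast
  next
    assume "QE (loc_class sc x 1) (loc_class sc y 1)"
    then show ?thesis using QE_all loc_class_mem by (metis one_neq_zero)
  qed
next
  assume "appr x y"
  then obtain a b where h: "x \<noteq> 0" "y \<noteq> 0" "a \<noteq> 0" "b \<noteq> 0" "sc a x = sc b y"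
    unfolding appr_def by blast
  have step: "QR (loc_class sc z 1) (loc_class sc (sc e z) 1)" if "z \<noteq> 0" "e \<noteq> 0" for z e
  proof -
    have 1: "loc_scale sc (Fract 1 1) (loc_class sc z 1) = loc_class sc z 1"
      using loc_scale_eq[of 1 1 1 z] by simp
    have 2: "loc_scale sc (Fract e 1) (loc_class sc z 1) = loc_class sc (sc e z) 1"
      using loc_scale_eq[of 1 1 e z] by simp
    show ?thesis unfolding proj_rel_def
      using 1 2 loc_class_carrier loc_zero_iff that scale_nz by (metis one_neq_zero)
  qed
  show "equivclp QR (loc_class sc x 1) (loc_class sc y 1)"
    using step[of x a] step[of y b] h
    by (metis converse_r_into_equivclp equivclp_trans r_into_equivclp)
qed

end

theorem theorem4p13:
  fixes sc :: "'a::idom \<Rightarrow> 'b::ab_group_add \<Rightarrow> 'b"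
  assumes "module sc"
    and "torsion_free sc"
  shows "\<exists>F. (\<forall>m. m \<noteq> 0 \<longrightarrow>
              F (proj_class sc UNIV 0 m) =
              proj_class (loc_scale sc) (loc_carrier sc) (loc_zero sc) (loc_class sc m 1))
          \<and> bij_betw F (proj_space sc UNIV 0)
              (proj_space (loc_scale sc) (loc_carrier sc) (loc_zero sc))"
proof -
  interpret tfmod sc using assms by (simp add: tfmod_def tfmod_axioms_def)
  define G where "G m = proj_class (loc_scale sc) (loc_carrier sc) (loc_zero sc) (loc_class sc m 1)" for m
  define F where "F C = G (SOME m. m \<noteq> 0 \<and> C = proj_class sc UNIV 0 m)" for C
  have Pc: "proj_class sc UNIV 0 x = proj_class sc UNIV 0 y \<longleftrightarrow> appr x y"
    if "x \<noteq> 0" "y \<noteq> 0" for x y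
    using P_equiv[OF that] class_eq class_eqD unfolding proj_class_def by metis
  have Gc: "G x = G y \<longleftrightarrow> appr x y" if "x \<noteq> 0" "y \<noteq> 0" for x y
    using Q_equiv[OF that] class_eq class_eqD unfolding proj_class_def G_def by metis
  have FP: "F (proj_class sc UNIV 0 m) = G m" if "m \<noteq> 0" for m
  proof -
    let ?m = "SOME m'. m' \<noteq> 0 \<and> proj_class sc UNIV 0 m = proj_class sc UNIV 0 m'"
    have "?m \<noteq> 0 \<and> proj_class sc UNIV 0 m = proj_class sc UNIV 0 ?m"
      by (rule someI[of _ m]) (use that in simp)
    then have "appr ?m m" using Pc that by metis
    then show ?thesis unfolding F_def using Gc that appr_def by metis
  qed
  show ?thesis
  proof (intro exI conjI allI impI)
    show "F (proj_class sc UNIV 0 m) =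
      proj_class (loc_scale sc) (loc_carrier sc) (loc_zero sc) (loc_class sc m 1)" if "m \<noteq> 0" for m
      using FP[OF that] G_def by simp
    show "bij_betw F (proj_space sc UNIV 0) (proj_space (loc_scale sc) (loc_carrier sc) (loc_zero sc))"
    proof (rule bij_betw_imageI)
      show "inj_on F (proj_space sc UNIV 0)"
      proof (rule inj_onI)
        fix C D assume "C \<in> proj_space sc UNIV 0" "D \<in> proj_space sc UNIV 0" "F C = F D"
        then obtain x y where "x \<noteq> 0" "y \<noteq> 0" "C = proj_class sc UNIV 0 x" "D = proj_class sc UNIV 0 y"
          unfolding proj_space_def by blast
        then show "C = D" using \<open>F C = F D\<close> FP Gc Pc by metis
      qed
      show "F ` proj_space sc UNIV 0 = proj_space (loc_scale sc) (loc_carrier sc) (loc_zero sc)"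
      proof
        show "F ` proj_space sc UNIV 0 \<subseteq> proj_space (loc_scale sc) (loc_carrier sc) (loc_zero sc)"
        proof
          fix Z assume "Z \<in> F ` proj_space sc UNIV 0"
          then obtain x where x: "x \<noteq> 0" "Z = G x" unfolding proj_space_def using FP by auto
          have "loc_class sc x 1 \<in> loc_carrier sc - {loc_zero sc}"
            using loc_class_carrier loc_zero_iff x by simp
          then show "Z \<in> proj_space (loc_scale sc) (loc_carrier sc) (loc_zero sc)"
            unfolding proj_space_def x G_def by blast
        qed
        show "proj_space (loc_scale sc) (loc_carrier sc) (loc_zero sc) \<subseteq> F ` proj_space sc UNIV 0"
        proof
          fix Z assume "Z \<in> proj_space (loc_scale sc) (loc_carrier sc) (loc_zero sc)"
          then obtain X where X: "X \<in> loc_carrier sc" "X \<noteq> loc_zero sc"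
            "Z = proj_class (loc_scale sc) (loc_carrier sc) (loc_zero sc) X"
            unfolding proj_space_def by blast
          obtain m s where ms: "s \<noteq> 0" "X = loc_class sc m s" using loc_carrierE[OF X(1)] by blast
          have m: "m \<noteq> 0" using X(2) ms loc_zero_iff by simp
          have 1: "loc_scale sc (Fract 1 1) X = X"
            using loc_scale_eq[of s 1 1 m] ms by simp
          have 2: "loc_scale sc (Fract s 1) X = loc_class sc m 1"
            using loc_scale_eq[of s 1 s m] ms by (simp add: loc_class_eq)
          have "QR X (loc_class sc m 1)" unfolding proj_rel_def
            using 1 2 X loc_class_carrier loc_zero_iff m by (metis one_neq_zero)
          then have "Z = G m" unfolding X(3) G_def proj_class_def
            using class_eq r_into_equivclp by metis
          then show "Z \<in> F ` proj_space sc UNIV 0"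
            using FP m unfolding proj_space_def by (metis DiffI UNIV_I image_eqI singletonD)
        qed
      qed
    qed
  qed
qed

end
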